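(* Consider the uncertain system \[ \dot x = f(x) + g(x)u + \varphi(x,u)\theta,\qquad \varphi(x,u)=[F(x)\;\; G(x)\,\mathrm{diag}(u)]\in\mathbb{R}^{n\times(p+m)}, \] with input $u\in\mathcal{U}\subseteq\mathbb{R}^m$, known locally Lipschitz $f,g$, known $F:\mathbb{R}^n\to\mathbb{R}^{n\times p}$, $G:\mathbb{R}^n\to\mathbb{R}^{n\times m}$, and unknown $\theta\in\mathbb{R}^{p+m}$ lying in a known hyperrectangle $\Theta=[\underline{\theta}_1,\overline{\theta}_1]\times\cdots\times[\underline{\theta}_{p+m},\overline{\theta}_{p+m}]$. Let $\{\Xi_k\}_{k\ge0}$ be the sequence of parameter sets generated by the integral set-membership identification scheme described below. Let $h:\mathbb{R}^n\to\mathbb{R}$ be continuously differentiable, $\mathcal{C}=\{x:h(x)\ge0\}$, and suppose there is an extended class $\mathcal{K}$ function $\alpha$ such that for all $x\in\mathcal{C}$ \[ \sup_{u\in\mathcal{U}}\inf_{\theta\in\Theta}\dot h(x,u,\theta)\ge-\alpha(h(x)),\qquad \dot h(x,u,\theta)=L_fh(x)+L_gh(x)u+L_\varphi h(x,u)\theta. \] Then $\sup_{u\in\mathcal{U}}\inf_{\theta\in\Xi_k}\dot h(x,u,\theta)\ge-\alpha(h(x))$ for all $x\in\mathcal{C}$ and all $k\in\mathbb{Z}_{\ge0}$.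
   Context: $L_fh=\nabla h\, f$, $L_gh=\nabla h\, g$, $L_\varphi h(x,u)=\nabla h(x)\varphi(x,u)$. Extended class $\mathcal{K}$: continuous strictly increasing $\alpha:\mathbb{R}\to\mathbb{R}$ with $\alpha(0)=0$. The identification scheme: let $x(\cdot)$ be a solution under an input signal $u(\cdot)$; fix $\Delta t>0$ and for $t\ge\Delta t$ let $\Delta x(t)=\int_{t-\Delta t}^t\dot x\,ds$, $\mathcal{F}(t)=\int_{t-\Delta t}^t f(x(s))ds$, $\mathcal{G}(t)=\int_{t-\Delta t}^t g(x(s))u(s)ds$, $\mathcal{S}(t)=\int_{t-\Delta t}^t\varphi(x(s),u(s))ds$. Let $\{t_k\}$ be strictly increasing with $t_0=0$; at time $t$ a history stack $\{\Delta x_j(t),\mathcal{F}_j(t),\mathcal{G}_j(t),\mathcal{S}_j(t)\}_{j\in\mathcal{M}(t)}$ consists of values of $(\Delta x,\mathcal{F},\mathcal{G},\mathcal{S})$ recorded at times in $[\Delta t,t]$. With $\varepsilon>0$, $\Xi_0=\Theta$, and for $k\ge1$, $\Xi_k=\prod_i[\underline\theta_i^k,\overline\theta_i^k]$ where $\underline\theta_i^k$ (resp. $\overline\theta_i^k$) is the minimum (resp. maximum) of $\theta_i$ over $\theta\in\Xi_{k-1}$ satisfying $-\varepsilon\mathbf{1}_n\le\Delta x_j(t_k)-\mathcal{F}_j(t_k)-\mathcal{G}_j(t_k)-\mathcal{S}_j(t_k)\theta\le\varepsilon\mathbf{1}_n$ for all $j\in\mathcal{M}(t_k)$ ($\mathbf{1}_n$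 the vector of ones, inequalities componentwise). *)

theory Defs
  imports "HOL-Analysis.Analysis" "HOL-Library.Extended_Real"
begin

text \<open>Regressor phi(x,u) = [F(x)  G(x) diag(u)], an n x (p+m) matrix; columns indexed by 'p + 'm.\<close>
definition phi :: "(real^'n \<Rightarrow> real^'p^'n) \<Rightarrow> (real^'n \<Rightarrow> real^'m^'n)
                   \<Rightarrow> real^'n \<Rightarrow> real^'m \<Rightarrow> real^('p + 'm)^'n" where
  "phi F G y u = (\<chi> i. \<chi> j. (case j of Inl a \<Rightarrow> F y $ i $ a | Inr b \<Rightarrow> G y $ i $ b * u $ b))"

definition Lf :: "(real^'n \<Rightarrow> real^'n) \<Rightarrow> (real^'n \<Rightarrow> real^'n) \<Rightarrow> real^'n \<Rightarrow> real" where
  "Lf Dh f y = Dh y \<bullet> f y"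
definition Lg :: "(real^'n \<Rightarrow> real^'n) \<Rightarrow> (real^'n \<Rightarrow> real^'m^'n) \<Rightarrow> real^'n \<Rightarrow> real^'m" where
  "Lg Dh g y = transpose (g y) *v Dh y"
definition Lphi :: "(real^'n \<Rightarrow> real^'n) \<Rightarrow> (real^'n \<Rightarrow> real^'q^'n) \<Rightarrow> real^'n \<Rightarrow> real^'q" where
  "Lphi Dh Phi y = transpose (Phi y) *v Dh y"

definition hdot :: "(real^'n \<Rightarrow> real^'n) \<Rightarrow> (real^'n \<Rightarrow> real^'n) \<Rightarrow> (real^'n \<Rightarrow> real^'m^'n)
     \<Rightarrow> (real^'n \<Rightarrow> real^'p^'n) \<Rightarrow> (real^'n \<Rightarrow> real^'m^'n)
     \<Rightarrow> real^'n \<Rightarrow> real^'m \<Rightarrow> real^('p+'m) \<Rightarrow> real" where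
  "hdot Dh f g F G y u th =
     Lf Dh f y + Lg Dh g y \<bullet> u + Lphi Dh (\<lambda>z. phi F G z u) y \<bullet> th"

definition ext_class_K :: "(real \<Rightarrow> real) \<Rightarrow> bool" where
  "ext_class_K \<alpha> \<longleftrightarrow> continuous_on UNIV \<alpha> \<and> strict_mono \<alpha> \<and> \<alpha> 0 = 0"

definition DeltaX :: "(real \<Rightarrow> real^'n) \<Rightarrow> real \<Rightarrow> real \<Rightarrow> real^'n" where
  "DeltaX x dt t = integral {t - dt..t} (\<lambda>s. vector_derivative x (at s within {0..}))"
definition FInt :: "(real^'n \<Rightarrow> real^'n) \<Rightarrow> (real \<Rightarrow> real^'n) \<Rightarrow> real \<Rightarrow> real \<Rightarrow> real^'n" where
  "FInt f x dt t = integral {t - dt..t} (\<lambda>s. f (x s))"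
definition GInt :: "(real^'n \<Rightarrow> real^'m^'n) \<Rightarrow> (real \<Rightarrow> real^'n) \<Rightarrow> (real \<Rightarrow> real^'m)
     \<Rightarrow> real \<Rightarrow> real \<Rightarrow> real^'n" where
  "GInt g x u dt t = integral {t - dt..t} (\<lambda>s. g (x s) *v u s)"
definition SInt :: "(real^'n \<Rightarrow> real^'p^'n) \<Rightarrow> (real^'n \<Rightarrow> real^'m^'n) \<Rightarrow> (real \<Rightarrow> real^'n)
     \<Rightarrow> (real \<Rightarrow> real^'m) \<Rightarrow> real \<Rightarrow> real \<Rightarrow> real^('p+'m)^'n" where
  "SInt F G x u dt t = integral {t - dt..t} (\<lambda>s. phi F G (x s) (u s))"

definition consistent :: "real \<Rightarrow> real^'n \<Rightarrow> real^'n \<Rightarrow> real^'n \<Rightarrow> real^'q^'n \<Rightarrow> real^'q \<Rightarrow> bool" where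
  "consistent eps dx Fi Gi Si th \<longleftrightarrow>
     (\<forall>c. - eps \<le> (dx - Fi - Gi - Si *v th) $ c \<and> (dx - Fi - Gi - Si *v th) $ c \<le> eps)"

text \<open>The stack at time t is the finite set stk t of
  recording times; entry at recording time tau is (DX tau, FI tau, GI tau, SI tau).\<close>
primrec Xi :: "real^'q \<Rightarrow> real^'q \<Rightarrow> real \<Rightarrow> (nat \<Rightarrow> real) \<Rightarrow> (real \<Rightarrow> real set)
     \<Rightarrow> (real \<Rightarrow> real^'n) \<Rightarrow> (real \<Rightarrow> real^'n) \<Rightarrow> (real \<Rightarrow> real^'n) \<Rightarrow> (real \<Rightarrow> real^'q^'n)
     \<Rightarrow> nat \<Rightarrow> (real^'q) set" where
  "Xi thlo thhi eps tk stk DX FI GI SI 0 = cbox thlo thhi"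
| "Xi thlo thhi eps tk stk DX FI GI SI (Suc k) =
     (let S = {th \<in> Xi thlo thhi eps tk stk DX FI GI SI k.
                 \<forall>\<tau>\<in>stk (tk (Suc k)). consistent eps (DX \<tau>) (FI \<tau>) (GI \<tau>) (SI \<tau>) th}
      in cbox (\<chi> i. Inf ((\<lambda>th. th $ i) ` S)) (\<chi> i. Sup ((\<lambda>th. th $ i) ` S)))"

end

theory Submission
  imports Defs
begin


lemma lin_mv: "bounded_linear (\<lambda>M::real^'q^'n. M *v th)"
proof -
  have "linear (\<lambda>M::real^'q^'n. M *v th)"
    by (rule linearI) (auto simp: matrix_vector_mult_def vec_eq_iff sum.distrib sum_distrib_left algebra_simps)
  then show ?thesis by (simp add: linear_conv_bounded_linear)
qed

lemma box_lemma:
  fixes S :: "(real^'q) set"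
  assumes "S \<subseteq> cbox a b" "th \<in> S"
  shows "th \<in> cbox (\<chi> i. Inf ((\<lambda>th. th $ i) ` S)) (\<chi> i. Sup ((\<lambda>th. th $ i) ` S))"
    and "cbox (\<chi> i. Inf ((\<lambda>th. th $ i) ` S)) (\<chi> i. Sup ((\<lambda>th. th $ i) ` S)) \<subseteq> cbox a b"
proof -
  have mem: "a $ i \<le> z $ i \<and> z $ i \<le> b $ i" if zS: "z \<in> S" for z i
  proof -
    have "z \<in> cbox a b" using assms(1) zS by blast
    then show ?thesis unfolding mem_box_cart(2) by blast
  qed
  have bb1: "bdd_below ((\<lambda>th. th $ i) ` S)" for i
    unfolding bdd_below_def using mem by blast
  have bb2: "bdd_above ((\<lambda>th. th $ i) ` S)" for i
    unfolding bdd_above_def using mem by blast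
  have ne: "(\<lambda>th. th $ i) ` S \<noteq> {}" for i using assms(2) by blast
  have l1: "Inf ((\<lambda>th. th $ i) ` S) \<le> th $ i" for i
    by (rule cInf_lower[OF imageI[OF assms(2)] bb1])
  have l2: "th $ i \<le> Sup ((\<lambda>th. th $ i) ` S)" for i
    by (rule cSup_upper[OF imageI[OF assms(2)] bb2])
  show "th \<in> cbox (\<chi> i. Inf ((\<lambda>th. th $ i) ` S)) (\<chi> i. Sup ((\<lambda>th. th $ i) ` S))"
    unfolding mem_box_cart(2) using l1 l2 by simp
  have l3: "a $ i \<le> Inf ((\<lambda>th. th $ i) ` S)" for i
    by (rule cInf_greatest[OF ne]) (use mem in blast)
  have l4: "Sup ((\<lambda>th. th $ i) ` S) \<le> b $ i" for i
    by (rule cSup_least[OF ne]) (use mem in blast)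
  show "cbox (\<chi> i. Inf ((\<lambda>th. th $ i) ` S)) (\<chi> i. Sup ((\<lambda>th. th $ i) ` S)) \<subseteq> cbox a b"
  proof
    fix z assume "z \<in> cbox (\<chi> i. Inf ((\<lambda>th. th $ i) ` S)) (\<chi> i. Sup ((\<lambda>th. th $ i) ` S))"
    then have "Inf ((\<lambda>th. th $ i) ` S) \<le> z $ i \<and> z $ i \<le> Sup ((\<lambda>th. th $ i) ` S)" for i
      unfolding mem_box_cart(2) by simp
    then show "z \<in> cbox a b" unfolding mem_box_cart(2) using l3 l4 by (meson order_trans)
  qed
qed

theorem proposition1:
  fixes f :: "real^'n \<Rightarrow> real^'n" and g :: "real^'n \<Rightarrow> real^'m^'n"
    and F :: "real^'n \<Rightarrow> real^'p^'n" and G :: "real^'n \<Rightarrow> real^'m^'n"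
    and U :: "(real^'m) set"
    and thlo thhi :: "real^('p + 'm)" and theta :: "real^('p + 'm)"
    and h :: "real^'n \<Rightarrow> real" and Dh :: "real^'n \<Rightarrow> real^'n" and \<alpha> :: "real \<Rightarrow> real"
    and x :: "real \<Rightarrow> real^'n" and u :: "real \<Rightarrow> real^'m"
    and dt eps :: real and tk :: "nat \<Rightarrow> real" and stk :: "real \<Rightarrow> real set"
  assumes f_lip: "\<forall>y. \<exists>r>0. \<exists>L. L-lipschitz_on (ball y r) f"
    and g_lip: "\<forall>y. \<exists>r>0. \<exists>L. L-lipschitz_on (ball y r) g"
    and theta_in: "theta \<in> cbox thlo thhi"
    and h_deriv: "\<forall>y. (h has_derivative (\<lambda>v. Dh y \<bullet> v)) (at y)"
    and h_C1: "continuous_on UNIV Dh"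
    and alpha_K: "ext_class_K \<alpha>"
    and cbf: "\<forall>y. h y \<ge> 0 \<longrightarrow>
        (SUP v\<in>U. INF th\<in>cbox thlo thhi. ereal (hdot Dh f g F G y v th)) \<ge> ereal (- \<alpha> (h y))"
    and dt_pos: "dt > 0" and eps_pos: "eps > 0"
    and sol: "\<forall>t\<ge>0. (x has_vector_derivative
                 (f (x t) + g (x t) *v u t + phi F G (x t) (u t) *v theta)) (at t within {0..})"
    and u_in: "\<forall>t\<ge>0. u t \<in> U"
    and integrable: "\<forall>t\<ge>dt. (\<lambda>s. g (x s) *v u s) integrable_on {t - dt..t}
                             \<and> (\<lambda>s. phi F G (x s) (u s)) integrable_on {t - dt..t}"
    and tk_mono: "strict_mono tk" and tk0: "tk 0 = 0"
    and stack: "\<forall>t. finite (stk t) \<and> stk t \<subseteq> {dt..t}"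
  shows "\<forall>y. h y \<ge> 0 \<longrightarrow> (\<forall>k.
     (SUP v\<in>U. INF th\<in>Xi thlo thhi eps tk stk (DeltaX x dt) (FInt f x dt) (GInt g x u dt)
                               (SInt F G x u dt) k. ereal (hdot Dh f g F G y v th))
       \<ge> ereal (- \<alpha> (h y)))"
proof -
  define D where "D s = f (x s) + g (x s) *v u s + phi F G (x s) (u s) *v theta" for s
  have cons: "consistent eps (DeltaX x dt \<tau>) (FInt f x dt \<tau>) (GInt g x u dt \<tau>) (SInt F G x u dt \<tau>) theta"
    if "\<tau> \<ge> dt" for \<tau>
  proof -
    have sub: "{\<tau> - dt..\<tau>} \<subseteq> {0..}" using that by auto
    have vd: "vector_derivative x (at s within {0..}) = D s" if "s \<in> {\<tau> - dt..\<tau>}" for s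
    proof (rule vector_derivative_within)
      have s0: "s \<ge> 0" using that sub by auto
      have "s islimpt {0..s+1}" using s0 by (subst islimpt_Icc) auto
      then have "s islimpt {0..}" by (rule islimpt_subset) auto
      then show "at s within {0..} \<noteq> bot" by (simp add: trivial_limit_within)
      show "(x has_vector_derivative D s) (at s within {0..})" using sol that sub unfolding D_def by auto
    qed
    have ftc: "(D has_integral (x \<tau> - x (\<tau> - dt))) {\<tau> - dt..\<tau>}"
      apply (rule fundamental_theorem_of_calculus)
      using dt_pos apply simp
      using sol sub unfolding D_def
      by (meson atLeastAtMost_iff atLeast_iff has_vector_derivative_within_subset subset_iff)
    have DX: "DeltaX x dt \<tau> = integral {\<tau> - dt..\<tau>} D"
      unfolding DeltaX_def by (rule integral_cong) (use vd in auto)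
    have gi: "(\<lambda>s. g (x s) *v u s) integrable_on {\<tau> - dt..\<tau>}"
     and pi: "(\<lambda>s. phi F G (x s) (u s)) integrable_on {\<tau> - dt..\<tau>}" using integrable that by auto
    have pti: "((\<lambda>s. phi F G (x s) (u s) *v theta) has_integral (SInt F G x u dt \<tau> *v theta)) {\<tau> - dt..\<tau>}"
      using has_integral_linear[OF integrable_integral[OF pi] lin_mv[of theta]]
      unfolding SInt_def by (simp add: o_def)
    have Di: "D integrable_on {\<tau> - dt..\<tau>}" using ftc by blast
    have fi: "(\<lambda>s. f (x s)) integrable_on {\<tau> - dt..\<tau>}"
    proof -
      have "(\<lambda>s. D s - g (x s) *v u s - phi F G (x s) (u s) *v theta) integrable_on {\<tau> - dt..\<tau>}"
        using Di gi pti by (intro integrable_diff) auto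
      then show ?thesis unfolding D_def by simp
    qed
    have "integral {\<tau> - dt..\<tau>} D = FInt f x dt \<tau> + GInt g x u dt \<tau> + SInt F G x u dt \<tau> *v theta"
      unfolding D_def FInt_def GInt_def
      using integral_add[OF integrable_add[OF fi gi] has_integral_integrable[OF pti]]
            integral_add[OF fi gi] integral_unique[OF pti] by simp
    then have "DeltaX x dt \<tau> - FInt f x dt \<tau> - GInt g x u dt \<tau> - SInt F G x u dt \<tau> *v theta = 0"
      using DX by simp
    then show ?thesis unfolding consistent_def using eps_pos by simp
  qed
  have inv: "theta \<in> Xi thlo thhi eps tk stk (DeltaX x dt) (FInt f x dt) (GInt g x u dt) (SInt F G x u dt) k
     \<and> Xi thlo thhi eps tk stk (DeltaX x dt) (FInt f x dt) (GInt g x u dt) (SInt F G x u dt) k \<subseteq> cbox thlo thhi" for k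
  proof (induction k)
    case 0
    then show ?case using theta_in by simp
  next
    case (Suc k)
    let ?X = "Xi thlo thhi eps tk stk (DeltaX x dt) (FInt f x dt) (GInt g x u dt) (SInt F G x u dt) k"
    let ?S = "{th \<in> ?X. \<forall>\<tau>\<in>stk (tk (Suc k)). consistent eps (DeltaX x dt \<tau>) (FInt f x dt \<tau>) (GInt g x u dt \<tau>) (SInt F G x u dt \<tau>) th}"
    have S1: "?S \<subseteq> cbox thlo thhi" using Suc by auto
    have S2: "theta \<in> ?S" using Suc cons stack by (auto simp: subset_iff)
    show ?case using box_lemma[OF S1 S2] by (simp add: Let_def)
  qed
  show ?thesis
  proof (intro allI impI)
    fix y k assume hy: "h y \<ge> 0"
    let ?X = "Xi thlo thhi eps tk stk (DeltaX x dt) (FInt f x dt) (GInt g x u dt) (SInt F G x u dt) k"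
    have "(SUP v\<in>U. INF th\<in>cbox thlo thhi. ereal (hdot Dh f g F G y v th))
          \<le> (SUP v\<in>U. INF th\<in>?X. ereal (hdot Dh f g F G y v th))"
    proof (rule SUP_mono)
      fix v assume "v \<in> U"
      have "(INF th\<in>cbox thlo thhi. ereal (hdot Dh f g F G y v th)) \<le> (INF th\<in>?X. ereal (hdot Dh f g F G y v th))"
        by (rule INF_superset_mono) (use inv in auto)
      then show "\<exists>m\<in>U. (INF th\<in>cbox thlo thhi. ereal (hdot Dh f g F G y v th)) \<le> (INF th\<in>?X. ereal (hdot Dh f g F G y m th))"
        using \<open>v \<in> U\<close> by blast
    qed
    then show "(SUP v\<in>U. INF th\<in>?X. ereal (hdot Dh f g F G y v th)) \<ge> ereal (- \<alpha> (h y))"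
      using cbf hy order_trans by blast
  qed
qed

end
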